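(* Let $p>1$, $N\ge m$, and let $S$ be the set of pairs $(A,y)\in\mathbb R^{m\times N}\times\mathbb R^m$ such that every $m\times m$ submatrix of $A$ is invertible and $y\neq0$. For every $(A,y)\in S$: (i) the unique optimal solution $x^*$ of $\min\|x\|_p$ s.t. $Ax=y$ satisfies $|\mathrm{supp}(x^* )|\ge N-m+1$; (ii) if $0<\varepsilon<\|y\|_2$, the unique optimal solution $x^*$ of $\min\|x\|_p$ s.t. $\|Ax-y\|_2\le\varepsilon$ satisfies $|\mathrm{supp}(x^* )|\ge N-m+1$; (iii) for any $\lambda>0$, the unique optimal solution $x^*$ of $\min_x \frac12\|Ax-y\|_2^2+\lambda\|x\|_p^p$ satisfies $|\mathrm{supp}(x^* )|\ge N-m+1$; (iv) for any $r>0$, $\lambda_1>0$, $\lambda_2\ge0$, every nonzero optimal solution $x^*$ of $\min_x \frac12\|Ax-y\|_2^2+\lambda_1\|x\|_p^r+\lambda_2\|x\|_2^2$ satisfies $|\mathrm{supp}(x^* )|\ge N-m+1$.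
   Context: $\|x\|_p:=(\sum_i|x_i|^p)^{1/p}$; $\mathrm{supp}(x)=\{i: x_i\neq0\}$ and $|\cdot|$ denotes cardinality. *)

theory Defs
  imports Complex_Main "Jordan_Normal_Form.DL_Submatrix"
begin

definition pnorm :: "real \<Rightarrow> real vec \<Rightarrow> real" where
  "pnorm p x = (\<Sum>i<dim_vec x. \<bar>x $ i\<bar> powr p) powr (1 / p)"

definition norm2 :: "real vec \<Rightarrow> real" where
  "norm2 x = sqrt (\<Sum>i<dim_vec x. (x $ i)\<^sup>2)"

definition supp :: "real vec \<Rightarrow> nat set" where
  "supp x = {i. i < dim_vec x \<and> x $ i \<noteq> 0}"

definition all_square_submatrices_invertible :: "real mat \<Rightarrow> bool" where
  "all_square_submatrices_invertible A \<longleftrightarrow>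
     (\<forall>J. J \<subseteq> {..<dim_col A} \<and> card J = dim_row A \<longrightarrow>
          invertible_mat (submatrix A UNIV J))"

end

theory Submission imports Defs begin

lemma mult_mat_vec_index:
  assumes "A \<in> carrier_mat m N" "v \<in> carrier_vec N" "r < m"
  shows "(A *\<^sub>v v) $ r = (\<Sum>i<N. A $$ (r,i) * v $ i)"
  using assms by (auto simp: index_mult_mat_vec scalar_prod_def atLeast0LessThan)

lemma solve_on_J:
  assumes A: "A \<in> carrier_mat m N" and J: "J \<subseteq> {..<N}" "card J = m"
    and inv: "invertible_mat (submatrix A UNIV J)" and c: "c \<in> carrier_vec m"
  shows "\<exists>w \<in> carrier_vec N. A *\<^sub>v w = c \<and> (\<forall>i<N. i \<notin> J \<longrightarrow> w $ i = 0)"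
proof -
  define B where "B = submatrix A UNIV J"
  have cJ: "{j. j < N \<and> j \<in> J} = J" using J by auto
  have cR: "{i. i < m \<and> i \<in> (UNIV::nat set)} = {..<m}" by auto
  have B: "B \<in> carrier_mat m m" using A J unfolding B_def
    by (auto simp: dim_submatrix cJ cR)
  obtain Bi where BBi: "B * Bi = 1\<^sub>m m" and BiB: "Bi * B = 1\<^sub>m (dim_row Bi)"
    using inv B unfolding B_def[symmetric] invertible_mat_def inverts_mat_def by auto
  have "dim_col (B * Bi) = dim_col (1\<^sub>m m)" using BBi by simp
  then have "dim_col Bi = m" by simp
  moreover have "dim_col (Bi * B) = dim_col (1\<^sub>m (dim_row Bi))" using BiB by simp
  then have "dim_row Bi = m" using B by simp
  ultimately have Bi: "Bi \<in> carrier_mat m m" by auto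
  define u where "u = Bi *\<^sub>v c"
  have u: "u \<in> carrier_vec m" using Bi c unfolding u_def by auto
  have Bu: "B *\<^sub>v u = c" unfolding u_def
    using assoc_mult_mat_vec[OF B Bi c, symmetric] BBi c by simp
  have pk: "l < m \<Longrightarrow> pick J l \<in> J" for l using pick_in_set[of l J] J by auto
  define w where "w = vec N (\<lambda>i. \<Sum>l<m. if i = pick J l then u $ l else 0)"
  have w: "w \<in> carrier_vec N" unfolding w_def by auto
  have wz: "\<forall>i<N. i \<notin> J \<longrightarrow> w $ i = 0" unfolding w_def using pk by (auto intro!: sum.neutral)
  have "A *\<^sub>v w = c"
  proof (rule eq_vecI)
    show "dim_vec (A *\<^sub>v w) = dim_vec c" using A c by auto
    fix r assume "r < dim_vec c"
    then have r: "r < m" using c by auto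
    have "(A *\<^sub>v w) $ r = (\<Sum>i<N. A $$ (r,i) * w $ i)" by (rule mult_mat_vec_index[OF A w r])
    also have "\<dots> = (\<Sum>i<N. \<Sum>l<m. if i = pick J l then A $$ (r,i) * u $ l else 0)"
      unfolding w_def by (auto simp: sum_distrib_left intro!: sum.cong)
    also have "\<dots> = (\<Sum>l<m. \<Sum>i<N. if i = pick J l then A $$ (r,i) * u $ l else 0)"
      by (rule sum.swap)
    also have "\<dots> = (\<Sum>l<m. A $$ (r, pick J l) * u $ l)"
      using pk J by (auto intro!: sum.cong simp: sum.delta') blast
    also have "\<dots> = (\<Sum>l<m. B $$ (r, l) * u $ l)"
      unfolding B_def using r A J by (auto intro!: sum.cong simp: submatrix_index cJ cR pick_UNIV)
    also have "\<dots> = (B *\<^sub>v u) $ r" by (rule mult_mat_vec_index[OF B u r, symmetric])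
    finally show "(A *\<^sub>v w) $ r = c $ r" using Bu by simp
  qed
  then show ?thesis using w wz by blast
qed
lemma K2:
  fixes c p :: real assumes c: "c\<ge>0" and p: "p>1"
  shows "\<exists>t>0. t < 1 \<and> (1-t)^2 + c * t powr p < 1"
proof -
  have M: "((\<lambda>h. h - 2 + c * h powr (p-1)) \<longlongrightarrow> 0 - 2 + c * 0 powr (p-1)) (at_right 0)"
    using p by (intro tendsto_intros) (auto simp: eventually_at_right_field intro!: exI[of _ 1])
  have neg: "0 - 2 + c * 0 powr (p-1) < (0::real)" using p by simp
  have ev: "eventually (\<lambda>h. h - 2 + c * h powr (p-1) < 0) (at_right 0)"
    using order_tendstoD(2)[OF M neg] .
  have lt1: "eventually (\<lambda>h. h < 1) (at_right (0::real))"
    unfolding eventually_at_right_field by (auto intro!: exI[of _ 1])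
  have ev2: "eventually (\<lambda>h. 0 < h \<and> h < 1 \<and> (1-h)^2 + c * h powr p < 1) (at_right 0)"
    using ev eventually_at_right_less[of 0] lt1
  proof eventually_elim
    case (elim h)
    have "h powr p = h powr (p-1) * h" using elim(2)
      by (simp add: powr_diff)
    then have "(h - 2 + c * h powr (p-1)) * h = (1-h)^2 + c * h powr p - 1"
      using elim(2) by (simp add: field_simps power2_eq_square)
    moreover have "(h - 2 + c * h powr (p-1)) * h < 0"
      using elim by (simp add: mult_neg_pos)
    ultimately show ?case using elim by simp
  qed
  then obtain b where b: "b > 0" and H: "\<forall>y>0. y < b \<longrightarrow> 0 < y \<and> y < 1 \<and> (1 - y)\<^sup>2 + c * y powr p < 1"
    unfolding eventually_at_right_field by auto
  have "0 < b/2 \<and> b/2 < 1 \<and> (1 - b/2)\<^sup>2 + c * (b/2) powr p < 1" using H[rule_format, of "b/2"] b by auto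
  then show ?thesis by blast
qed

definition sp :: "real \<Rightarrow> real vec \<Rightarrow> real" where
  "sp q x = (\<Sum>i<dim_vec x. \<bar>x $ i\<bar> powr q)"

lemma sp_nonneg: "sp q x \<ge> 0" unfolding sp_def by (auto intro!: sum_nonneg)

lemma spdiff:
  assumes dx: "dim_vec x = N" and dz: "dim_vec z = N" and k: "k < N" "k \<notin> J" and J: "J \<subseteq> {..<N}"
    and same: "\<forall>i<N. i \<notin> insert k J \<longrightarrow> z$i = x$i" and xJ: "\<forall>i\<in>J. x$i = 0"
    and zJ: "\<forall>i\<in>J. \<bar>z$i\<bar> = s * \<bar>w$i\<bar>" and zk: "\<bar>z$k\<bar> = a - s" and xk: "\<bar>x$k\<bar> = a"
    and s: "s \<ge> 0" and q: "q > 0"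
  shows "sp q z = sp q x + ((a-s) powr q - a powr q + (\<Sum>i\<in>J. \<bar>w$i\<bar> powr q) * s powr q)"
proof -
  have fJ: "finite J" using J finite_subset by blast
  have "sp q z - sp q x = (\<Sum>i<N. \<bar>z$i\<bar> powr q - \<bar>x$i\<bar> powr q)"
    unfolding sp_def dx dz by (simp add: sum_subtractf)
  also have "\<dots> = (\<Sum>i\<in>insert k J. \<bar>z$i\<bar> powr q - \<bar>x$i\<bar> powr q)"
    by (rule sum.mono_neutral_right) (use J k same in auto)
  also have "\<dots> = ((a-s) powr q - a powr q) + (\<Sum>i\<in>J. \<bar>z$i\<bar> powr q - \<bar>x$i\<bar> powr q)"
    using fJ k zk xk by simp
  also have "(\<Sum>i\<in>J. \<bar>z$i\<bar> powr q - \<bar>x$i\<bar> powr q) = (\<Sum>i\<in>J. \<bar>w$i\<bar> powr q) * s powr q"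
    unfolding sum_distrib_right using zJ xJ s q by (auto intro!: sum.cong simp: powr_mult)
  finally show ?thesis by simp
qed
lemma K:
  fixes a D q :: real assumes a: "a>0" and D: "D\<ge>0" and q: "q>1"
  shows "\<exists>\<delta>>0. \<forall>s. 0<s \<and> s<\<delta> \<longrightarrow> (a-s) powr q + D * s powr q < a powr q"
proof -
  have d: "((\<lambda>s. (a - s) powr q) has_real_derivative (- q * a powr (q-1))) (at 0)"
    using DERIV_fun_powr[of "\<lambda>s. a - s" "-1" 0 q] a
    by (auto intro!: derivative_eq_intros)
  have L: "((\<lambda>h. ((a-h) powr q - a powr q)/h) \<longlongrightarrow> -q*a powr (q-1)) (at 0)"
    using DERIV_D[OF d] by simp
  have L': "((\<lambda>h. ((a-h) powr q - a powr q)/h) \<longlongrightarrow> -q*a powr (q-1)) (at_right 0)"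
    by (rule tendsto_mono[OF at_le L]) simp
  have M: "((\<lambda>h. D * h powr (q-1)) \<longlongrightarrow> D * 0 powr (q-1)) (at_right 0)"
    using q by (intro tendsto_intros) (auto simp: eventually_at_right_field intro!: exI[of _ 1])
  have S: "((\<lambda>h. ((a-h) powr q - a powr q)/h + D * h powr (q-1)) \<longlongrightarrow> -q*a powr (q-1) + 0) (at_right 0)"
    using tendsto_add[OF L' M] q by simp
  have neg: "-q*a powr (q-1) + 0 < 0" using a q by simp
  have ev: "eventually (\<lambda>h. ((a-h) powr q - a powr q)/h + D * h powr (q-1) < 0) (at_right 0)"
    using order_tendstoD(2)[OF S neg] .
  have ev2: "eventually (\<lambda>h. (a-h) powr q + D * h powr q < a powr q) (at_right 0)"
    using ev eventually_at_right_less[of 0]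
  proof eventually_elim
    case (elim h)
    have "h powr q = h powr (q-1) * h" using elim(2)
      by (simp add: powr_diff)
    then have "(((a-h) powr q - a powr q)/h + D * h powr (q-1)) * h = (a-h) powr q - a powr q + D * h powr q"
      using elim(2) by (simp add: field_simps)
    moreover have "(((a-h) powr q - a powr q)/h + D * h powr (q-1)) * h < 0"
      using elim by (simp add: mult_neg_pos)
    ultimately show ?case by simp
  qed
  then show ?thesis unfolding eventually_at_right_field by auto
qed

lemma perturb:
  assumes A: "A \<in> carrier_mat m N" and J: "J \<subseteq> {..<N}" "card J = m"
    and inv: "invertible_mat (submatrix A UNIV J)"
    and x: "x \<in> carrier_vec N" and xJ: "\<forall>j\<in>J. x$j = 0" and k: "k<N" "k\<notin>J" "x$k \<noteq> 0"
    and p: "p > 1"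
  shows "\<exists>z\<in>carrier_vec N. A *\<^sub>v z = A *\<^sub>v x \<and> sp p z < sp p x \<and> sp 2 z < sp 2 x"
proof -
  obtain w where w: "w \<in> carrier_vec N" "A *\<^sub>v w = col A k" "\<forall>i<N. i\<notin>J \<longrightarrow> w$i = 0"
    using solve_on_J[OF A J inv col_carrier_vec[OF k(1) A]] by blast
  define d where "d = vec N (\<lambda>i. (if i = k then 1 else 0) - w$i)"
  have d: "d \<in> carrier_vec N" unfolding d_def by auto
  have Ad: "A *\<^sub>v d = 0\<^sub>v m"
  proof (rule eq_vecI)
    show "dim_vec (A *\<^sub>v d) = dim_vec (0\<^sub>v m)" using A by simp
    fix r assume "r < dim_vec (0\<^sub>v m)"
    then have r: "r < m" by simp
    have "(A *\<^sub>v d) $ r = (\<Sum>i<N. A $$ (r,i) * d $ i)" by (rule mult_mat_vec_index[OF A d r])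
    also have "\<dots> = (\<Sum>i<N. (if i = k then A $$ (r,i) else 0) - A $$ (r,i) * w $ i)"
      unfolding d_def by (auto simp: algebra_simps intro!: sum.cong)
    also have "\<dots> = (\<Sum>i<N. (if i = k then A $$ (r,i) else 0)) - (\<Sum>i<N. A $$ (r,i) * w $ i)"
      by (rule sum_subtractf)
    also have "\<dots> = A $$ (r,k) - (A *\<^sub>v w) $ r"
      using k mult_mat_vec_index[OF A w(1) r] by simp
    also have "\<dots> = 0" using w(2) r k A by simp
    finally show "(A *\<^sub>v d) $ r = 0\<^sub>v m $ r" using r by simp
  qed
  define a where "a = \<bar>x$k\<bar>"
  have a: "a > 0" using k unfolding a_def by simp
  obtain \<delta>1 where d1: "\<delta>1 > 0" "\<forall>s. 0<s \<and> s<\<delta>1 \<longrightarrow> (a-s) powr p + (\<Sum>i\<in>J. \<bar>w$i\<bar> powr p) * s powr p < a powr p"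
    using K[OF a _ p, of "\<Sum>i\<in>J. \<bar>w$i\<bar> powr p"] by (auto simp: sum_nonneg)
  obtain \<delta>2 where d2: "\<delta>2 > 0" "\<forall>s. 0<s \<and> s<\<delta>2 \<longrightarrow> (a-s) powr 2 + (\<Sum>i\<in>J. \<bar>w$i\<bar> powr 2) * s powr 2 < a powr 2"
    using K[OF a, of "\<Sum>i\<in>J. \<bar>w$i\<bar> powr 2" 2] by (auto simp: sum_nonneg)
  define s where "s = min a (min \<delta>1 \<delta>2) / 2"
  have s: "0 < s" "s < a" "s < \<delta>1" "s < \<delta>2" unfolding s_def using a d1 d2 by auto
  define z where "z = x - (s * sgn (x$k)) \<cdot>\<^sub>v d"
  have z: "z \<in> carrier_vec N" unfolding z_def using x d by auto
  have Az: "A *\<^sub>v z = A *\<^sub>v x"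
  proof -
    have "A *\<^sub>v z = A *\<^sub>v x - (s * sgn (x$k)) \<cdot>\<^sub>v 0\<^sub>v m"
      unfolding z_def using A x d Ad by (simp add: mult_minus_distrib_mat_vec mult_mat_vec)
    also have "\<dots> = A *\<^sub>v x" using A x by (auto intro!: eq_vecI)
    finally show ?thesis .
  qed
  have zi: "z $ i = x $ i - s * sgn (x$k) * ((if i = k then 1 else 0) - w$i)" if "i < N" for i
    unfolding z_def d_def using that x by simp
  have same: "\<forall>i<N. i \<notin> insert k J \<longrightarrow> z$i = x$i" using zi w(3) by auto
  have zJ: "\<forall>i\<in>J. \<bar>z$i\<bar> = s * \<bar>w$i\<bar>"
  proof
    fix i assume i: "i \<in> J"
    then have "i < N" "i \<noteq> k" using J k by auto
    then have "z$i = s * sgn (x$k) * w$i" using zi xJ i by simp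
    then show "\<bar>z$i\<bar> = s * \<bar>w$i\<bar>" using s k by (simp add: abs_mult abs_sgn_eq)
  qed
  have "z$k = x$k - s * sgn (x$k)" using zi[OF k(1)] w(3) k by simp
  then have zk: "\<bar>z$k\<bar> = a - s" using s unfolding a_def by (cases "x$k > 0") auto
  have dims: "dim_vec x = N" "dim_vec z = N" using x z by auto
  have "sp p z = sp p x + ((a-s) powr p - a powr p + (\<Sum>i\<in>J. \<bar>w$i\<bar> powr p) * s powr p)"
    using spdiff[OF dims k(1,2) J(1) same xJ zJ zk] s p unfolding a_def by simp
  moreover have "sp 2 z = sp 2 x + ((a-s) powr 2 - a powr 2 + (\<Sum>i\<in>J. \<bar>w$i\<bar> powr 2) * s powr 2)"
    using spdiff[OF dims k(1,2) J(1) same xJ zJ zk] s unfolding a_def by simp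
  ultimately show ?thesis using z Az d1 d2 s by force
qed
lemma main_reduce:
  assumes A: "A \<in> carrier_mat m N" and asi: "all_square_submatrices_invertible A"
    and x: "x \<in> carrier_vec N" and nz: "x \<noteq> 0\<^sub>v N" and c: "\<not> card (supp x) \<ge> N - m + 1"
    and p: "p > 1" and mN: "N \<ge> m"
  shows "\<exists>z\<in>carrier_vec N. A *\<^sub>v z = A *\<^sub>v x \<and> sp p z < sp p x \<and> sp 2 z < sp 2 x"
proof -
  define Z where "Z = {i. i<N \<and> x$i = 0}"
  have U: "supp x \<union> Z = {..<N}" "supp x \<inter> Z = {}" using x unfolding Z_def supp_def by auto
  have "card (supp x) + card Z = N"
    using card_Un_disjoint[of "supp x" Z] U by (metis card_lessThan finite_Un finite_lessThan)
  then have cZ: "m \<le> card Z" using c mN by linarith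
  obtain J where J: "J \<subseteq> Z" "card J = m" by (rule obtain_subset_with_card_n[OF cZ])
  have JN: "J \<subseteq> {..<N}" using J unfolding Z_def by auto
  have inv: "invertible_mat (submatrix A UNIV J)"
    using asi JN J A unfolding all_square_submatrices_invertible_def by auto
  obtain k where k: "k < N" "x$k \<noteq> 0" using nz x by (auto simp: vec_eq_iff)
  have kJ: "k \<notin> J" using k J unfolding Z_def by auto
  have xJ: "\<forall>j\<in>J. x$j = 0" using J unfolding Z_def by auto
  show ?thesis by (rule perturb[OF A JN J(2) inv x xJ k(1) kJ k(2) p])
qed

lemma pn: "pnorm p x = sp p x powr (1/p)" unfolding pnorm_def sp_def by simp

lemma pn_pow: "p > 0 \<Longrightarrow> pnorm p x powr p = sp p x"
  unfolding pn using sp_nonneg[of p x] by (simp add: powr_powr)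

lemma abs_powr2: "\<bar>t::real\<bar> powr 2 = t^2"
  by (cases "t = 0") (auto simp: powr_numeral)

lemma n2sq: "(norm2 v)^2 = (\<Sum>i<dim_vec v. (v$i)^2)"
  unfolding norm2_def by (simp add: sum_nonneg)

lemma n2sp: "(norm2 v)^2 = sp 2 v"
  unfolding n2sq sp_def abs_powr2 ..

lemma pn_less: "p > 0 \<Longrightarrow> sp p z < sp p x \<Longrightarrow> pnorm p z < pnorm p x"
  unfolding pn by (rule powr_less_mono2) (auto simp: sp_nonneg)

lemma pn_nonneg: "pnorm p x \<ge> 0" unfolding pn by simp

lemma mult_zero_vec': "A \<in> carrier_mat m N \<Longrightarrow> A *\<^sub>v 0\<^sub>v N = 0\<^sub>v m"
  by (rule eq_vecI) (auto simp: mult_mat_vec_index)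

lemma norm2_minus_zero: "y \<in> carrier_vec m \<Longrightarrow> norm2 (0\<^sub>v m - y) = norm2 y"
  unfolding norm2_def by (auto intro!: sum.cong)

lemma pn_zero: "p > 0 \<Longrightarrow> pnorm p (0\<^sub>v N) powr p = 0"
  by (simp add: pn_pow sp_def)
theorem proposition3p1:
  fixes p :: real and m N :: nat and A :: "real mat" and y :: "real vec"
  assumes "p > 1" and "N \<ge> m"
    and "A \<in> carrier_mat m N" and "y \<in> carrier_vec m"
    and "all_square_submatrices_invertible A" and "y \<noteq> 0\<^sub>v m"
  shows
    "(\<forall>x \<in> carrier_vec N.
        (A *\<^sub>v x = y \<and> (\<forall>z \<in> carrier_vec N. A *\<^sub>v z = y \<longrightarrow> pnorm p x \<le> pnorm p z))
        \<longrightarrow> card (supp x) \<ge> N - m + 1)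
   \<and> (\<forall>\<epsilon>::real. 0 < \<epsilon> \<and> \<epsilon> < norm2 y \<longrightarrow>
       (\<forall>x \<in> carrier_vec N.
          (norm2 (A *\<^sub>v x - y) \<le> \<epsilon> \<and>
           (\<forall>z \<in> carrier_vec N. norm2 (A *\<^sub>v z - y) \<le> \<epsilon> \<longrightarrow> pnorm p x \<le> pnorm p z))
          \<longrightarrow> card (supp x) \<ge> N - m + 1))
   \<and> (\<forall>lam::real. 0 < lam \<longrightarrow>
       (\<forall>x \<in> carrier_vec N.
          (\<forall>z \<in> carrier_vec N.
              (1/2) * (norm2 (A *\<^sub>v x - y))\<^sup>2 + lam * (pnorm p x) powr p
            \<le> (1/2) * (norm2 (A *\<^sub>v z - y))\<^sup>2 + lam * (pnorm p z) powr p)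
          \<longrightarrow> card (supp x) \<ge> N - m + 1))
   \<and> (\<forall>r l1 l2 :: real. 0 < r \<and> 0 < l1 \<and> 0 \<le> l2 \<longrightarrow>
       (\<forall>x \<in> carrier_vec N. x \<noteq> 0\<^sub>v N \<and>
          (\<forall>z \<in> carrier_vec N.
              (1/2) * (norm2 (A *\<^sub>v x - y))\<^sup>2 + l1 * (pnorm p x) powr r + l2 * (norm2 x)\<^sup>2
            \<le> (1/2) * (norm2 (A *\<^sub>v z - y))\<^sup>2 + l1 * (pnorm p z) powr r + l2 * (norm2 z)\<^sup>2)
          \<longrightarrow> card (supp x) \<ge> N - m + 1))"
proof -
  have p0: "p > 0" using assms(1) by simp
  have A: "A \<in> carrier_mat m N" by fact
  have y: "y \<in> carrier_vec m" by fact
  have asi: "all_square_submatrices_invertible A" by fact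
  have A0: "A *\<^sub>v 0\<^sub>v N = 0\<^sub>v m" by (rule mult_zero_vec'[OF A])
  note red = main_reduce[OF A asi _ _ _ assms(1) assms(2)]
  have P1: "\<forall>x \<in> carrier_vec N.
        (A *\<^sub>v x = y \<and> (\<forall>z \<in> carrier_vec N. A *\<^sub>v z = y \<longrightarrow> pnorm p x \<le> pnorm p z))
        \<longrightarrow> card (supp x) \<ge> N - m + 1"
  proof (intro ballI impI)
    fix x assume x: "x \<in> carrier_vec N" and H: "A *\<^sub>v x = y \<and> (\<forall>z \<in> carrier_vec N. A *\<^sub>v z = y \<longrightarrow> pnorm p x \<le> pnorm p z)"
    show "card (supp x) \<ge> N - m + 1"
    proof (rule ccontr)
      assume c: "\<not> card (supp x) \<ge> N - m + 1"
      have nz: "x \<noteq> 0\<^sub>v N" using H A0 assms(6) by auto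
      obtain z where z: "z \<in> carrier_vec N" "A *\<^sub>v z = A *\<^sub>v x" "sp p z < sp p x"
        using red[OF x nz c] by auto
      have "pnorm p x \<le> pnorm p z" using H z by auto
      moreover have "pnorm p z < pnorm p x" using pn_less[OF p0 z(3)] .
      ultimately show False by simp
    qed
  qed
  have P2: "\<forall>\<epsilon>::real. 0 < \<epsilon> \<and> \<epsilon> < norm2 y \<longrightarrow>
       (\<forall>x \<in> carrier_vec N.
          (norm2 (A *\<^sub>v x - y) \<le> \<epsilon> \<and>
           (\<forall>z \<in> carrier_vec N. norm2 (A *\<^sub>v z - y) \<le> \<epsilon> \<longrightarrow> pnorm p x \<le> pnorm p z))
          \<longrightarrow> card (supp x) \<ge> N - m + 1)"
  proof (intro allI impI ballI)
    fix \<epsilon> :: real and x assume e: "0 < \<epsilon> \<and> \<epsilon> < norm2 y" and x: "x \<in> carrier_vec N"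
      and H: "norm2 (A *\<^sub>v x - y) \<le> \<epsilon> \<and>
           (\<forall>z \<in> carrier_vec N. norm2 (A *\<^sub>v z - y) \<le> \<epsilon> \<longrightarrow> pnorm p x \<le> pnorm p z)"
    show "card (supp x) \<ge> N - m + 1"
    proof (rule ccontr)
      assume c: "\<not> card (supp x) \<ge> N - m + 1"
      have nz: "x \<noteq> 0\<^sub>v N"
      proof
        assume "x = 0\<^sub>v N"
        then have "norm2 (A *\<^sub>v x - y) = norm2 y" using A0 norm2_minus_zero[OF y] by simp
        then show False using H e by simp
      qed
      obtain z where z: "z \<in> carrier_vec N" "A *\<^sub>v z = A *\<^sub>v x" "sp p z < sp p x"
        using red[OF x nz c] by auto
      have "pnorm p x \<le> pnorm p z" using H z by auto
      moreover have "pnorm p z < pnorm p x" using pn_less[OF p0 z(3)] .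
      ultimately show False by simp
    qed
  qed
  have P3: "\<forall>lam::real. 0 < lam \<longrightarrow>
       (\<forall>x \<in> carrier_vec N.
          (\<forall>z \<in> carrier_vec N.
              (1/2) * (norm2 (A *\<^sub>v x - y))\<^sup>2 + lam * (pnorm p x) powr p
            \<le> (1/2) * (norm2 (A *\<^sub>v z - y))\<^sup>2 + lam * (pnorm p z) powr p)
          \<longrightarrow> card (supp x) \<ge> N - m + 1)"
  proof (intro allI impI ballI)
    fix lam :: real and x assume lam: "0 < lam" and x: "x \<in> carrier_vec N"
      and H: "\<forall>z \<in> carrier_vec N.
              (1/2) * (norm2 (A *\<^sub>v x - y))\<^sup>2 + lam * (pnorm p x) powr p
            \<le> (1/2) * (norm2 (A *\<^sub>v z - y))\<^sup>2 + lam * (pnorm p z) powr p"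
    show "card (supp x) \<ge> N - m + 1"
    proof (rule ccontr)
      assume c: "\<not> card (supp x) \<ge> N - m + 1"
      have nz: "x \<noteq> 0\<^sub>v N"
      proof
        assume x0: "x = 0\<^sub>v N"
        have JN: "{..<m} \<subseteq> {..<N}" using assms(2) by auto
        have inv: "invertible_mat (submatrix A UNIV {..<m})"
          using asi JN A unfolding all_square_submatrices_invertible_def by auto
        obtain w where w: "w \<in> carrier_vec N" "A *\<^sub>v w = y"
          using solve_on_J[OF A JN _ inv y] by auto
        define Y where "Y = (\<Sum>i<m. (y$i)^2)"
        obtain i where i: "i < m" "y$i \<noteq> 0" using assms(6) y by (auto simp: vec_eq_iff)
        have Y: "Y > 0" unfolding Y_def by (rule sum_pos2[of _ i]) (use i in auto)
        define W where "W = sp p w"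
        define c where "c = 2 * lam * W / Y"
        have c0: "c \<ge> 0" unfolding c_def W_def using lam Y sp_nonneg[of p w] by simp
        obtain t where t: "t > 0" "t < 1" "(1-t)^2 + c * t powr p < 1" using K2[OF c0 assms(1)] by auto
        define z where "z = t \<cdot>\<^sub>v w"
        have z: "z \<in> carrier_vec N" using w unfolding z_def by auto
        have Az: "A *\<^sub>v z = t \<cdot>\<^sub>v y" unfolding z_def using A w by (simp add: mult_mat_vec)
        have r1: "(norm2 (A *\<^sub>v z - y))\<^sup>2 = (1-t)^2 * Y"
          unfolding n2sq Az Y_def using y by (auto simp: sum_distrib_left power2_eq_square algebra_simps intro!: sum.cong)
        have r2: "pnorm p z powr p = t powr p * W"
          unfolding pn_pow[OF p0] W_def sp_def z_def using t
          by (auto simp: sum_distrib_left abs_mult powr_mult intro!: sum.cong)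
        have r0: "(norm2 (A *\<^sub>v x - y))\<^sup>2 = Y"
          unfolding x0 A0 norm2_minus_zero[OF y] n2sq Y_def using y by simp
        have p0': "pnorm p x powr p = 0" unfolding x0 by (rule pn_zero[OF p0])
        have "(1/2) * (norm2 (A *\<^sub>v x - y))\<^sup>2 + lam * (pnorm p x) powr p
            \<le> (1/2) * (norm2 (A *\<^sub>v z - y))\<^sup>2 + lam * (pnorm p z) powr p" using H z by auto
        then have "Y/2 \<le> (1/2) * ((1-t)^2 * Y) + lam * (t powr p * W)" using r0 r1 r2 p0' by simp
        moreover have "(1/2) * ((1-t)^2 * Y) + lam * (t powr p * W) = (Y/2) * ((1-t)^2 + c * t powr p)"
          unfolding c_def using Y by (simp add: field_simps)
        ultimately have "Y/2 \<le> (Y/2) * ((1-t)^2 + c * t powr p)" by linarith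
        moreover have "(Y/2) * ((1-t)^2 + c * t powr p) < Y/2" using t(3) Y by simp
        ultimately show False by simp
      qed
      obtain z where z: "z \<in> carrier_vec N" "A *\<^sub>v z = A *\<^sub>v x" "sp p z < sp p x"
        using red[OF x nz c] by auto
      have "(1/2) * (norm2 (A *\<^sub>v x - y))\<^sup>2 + lam * (pnorm p x) powr p
            \<le> (1/2) * (norm2 (A *\<^sub>v z - y))\<^sup>2 + lam * (pnorm p z) powr p" using H z by auto
      then have "lam * sp p x \<le> lam * sp p z" using z(2) pn_pow[OF p0] by simp
      then show False using lam z(3) by simp
    qed
  qed
  have P4: "\<forall>r l1 l2 :: real. 0 < r \<and> 0 < l1 \<and> 0 \<le> l2 \<longrightarrow>
       (\<forall>x \<in> carrier_vec N. x \<noteq> 0\<^sub>v N \<and>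
          (\<forall>z \<in> carrier_vec N.
              (1/2) * (norm2 (A *\<^sub>v x - y))\<^sup>2 + l1 * (pnorm p x) powr r + l2 * (norm2 x)\<^sup>2
            \<le> (1/2) * (norm2 (A *\<^sub>v z - y))\<^sup>2 + l1 * (pnorm p z) powr r + l2 * (norm2 z)\<^sup>2)
          \<longrightarrow> card (supp x) \<ge> N - m + 1)"
  proof (intro allI impI ballI)
    fix r l1 l2 :: real and x assume rl: "0 < r \<and> 0 < l1 \<and> 0 \<le> l2" and x: "x \<in> carrier_vec N"
      and H: "x \<noteq> 0\<^sub>v N \<and>
          (\<forall>z \<in> carrier_vec N.
              (1/2) * (norm2 (A *\<^sub>v x - y))\<^sup>2 + l1 * (pnorm p x) powr r + l2 * (norm2 x)\<^sup>2
            \<le> (1/2) * (norm2 (A *\<^sub>v z - y))\<^sup>2 + l1 * (pnorm p z) powr r + l2 * (norm2 z)\<^sup>2)"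
    show "card (supp x) \<ge> N - m + 1"
    proof (rule ccontr)
      assume c: "\<not> card (supp x) \<ge> N - m + 1"
      obtain z where z: "z \<in> carrier_vec N" "A *\<^sub>v z = A *\<^sub>v x" "sp p z < sp p x" "sp 2 z < sp 2 x"
        using red[OF x _ c] H by auto
      have "(1/2) * (norm2 (A *\<^sub>v x - y))\<^sup>2 + l1 * (pnorm p x) powr r + l2 * (norm2 x)\<^sup>2
            \<le> (1/2) * (norm2 (A *\<^sub>v z - y))\<^sup>2 + l1 * (pnorm p z) powr r + l2 * (norm2 z)\<^sup>2"
        using H z by auto
      then have E: "l1 * (pnorm p x) powr r + l2 * sp 2 x \<le> l1 * (pnorm p z) powr r + l2 * sp 2 z"
        using z(2) n2sp by simp
      have "(pnorm p z) powr r < (pnorm p x) powr r"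
        by (rule powr_less_mono2) (use rl pn_nonneg pn_less[OF p0 z(3)] in auto)
      then have "l1 * (pnorm p z) powr r < l1 * (pnorm p x) powr r" using rl by simp
      moreover have "l2 * sp 2 z \<le> l2 * sp 2 x" using rl z(4) by (simp add: mult_left_mono)
      ultimately show False using E by simp
    qed
  qed
  show ?thesis using P1 P2 P3 P4 by blast
qed

end
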